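(* Let $\mu,\nu$ be compactly supported Borel probability measures on $\mathbb{R}^n$ and $(q,t)\in\mathbb{R}^2$ such that $B_{\mu,\nu}$ is differentiable at $(q,t)$; set $\alpha=-\frac{\partial B_{\mu,\nu}(q,t)}{\partial q}$ and $\beta=-\frac{\partial B_{\mu,\nu}(q,t)}{\partial t}$. Then $$\mathcal H^{q,t,B_{\mu,\nu}(q,t)}_{\mu,\nu}\Big(\big(\operatorname{supp}\mu\cap\operatorname{supp}\nu\big)\setminus E_{\mu,\nu}(\alpha,\beta)\Big)=0.$$
   Context: $B(x,r)$ denotes the closed ball of center $x$ and radius $r$; conventions $0^q=\infty$ for $q\le0$, $0^q=0$ for $q>0$. Centered $\delta$-packings (resp. coverings) of $E$ are countable families of pairwise disjoint closed balls (resp. closed balls covering $E$) $B(x_i,r_i)$ with $x_i\in E$, $0<r_i\le\delta$. For $q,t,s\in\mathbb{R}$: $\overline{\mathcal P}^{q,t,s}_{\mu,\nu,\delta}(E)=\sup\sum_i\mu(B(x_i,r_i))^q\nu(B(x_i,r_i))^t(2r_i)^s$ over centered $\delta$-packings, $\overline{\mathcal P}^{q,t,s}_{\mu,\nu}=\inf_{\delta>0}\overline{\mathcal P}^{q,t,s}_{\mu,\nu,\delta}$, $\mathcal P^{q,t,s}_{\mu,\nu}(E)=\inf\{\sum_i\overline{\mathcal P}^{q,t,s}_{\mu,\nu}(E_i):E\subseteq\bigcup_iE_i\}$; $\overline{\mathcal H}^{q,t,s}_{\mu,\nu,\delta}(E)$ is the same sum with infimum over centered $\delta$-coverings, $\overline{\mathcal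 H}^{q,t,s}_{\mu,\nu}=\sup_{\delta>0}\overline{\mathcal H}^{q,t,s}_{\mu,\nu,\delta}$, $\mathcal H^{q,t,s}_{\mu,\nu}(E)=\sup_{F\subseteq E}\overline{\mathcal H}^{q,t,s}_{\mu,\nu}(F)$. $B^{q,t}_{\mu,\nu}(E)$ is the unique value in $[-\infty,\infty]$ where $s\mapsto\mathcal P^{q,t,s}_{\mu,\nu}(E)$ jumps from $\infty$ (smaller $s$) to $0$ (larger $s$), and $B_{\mu,\nu}(q,t)=B^{q,t}_{\mu,\nu}(\operatorname{supp}\mu\cap\operatorname{supp}\nu)$. $E_{\mu,\nu}(\alpha,\beta)=\{x\in\operatorname{supp}\mu\cap\operatorname{supp}\nu:\lim_{r\to0}\frac{\log\mu(B(x,r))}{\log r}=\alpha,\ \lim_{r\to0}\frac{\log\nu(B(x,r))}{\log r}=\beta\}$. *)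

theory Defs
  imports "HOL-Probability.Probability"
begin

definition msupp :: "'a::metric_space measure \<Rightarrow> 'a set" where
  "msupp \<mu> = {x. \<forall>r>0. emeasure \<mu> (ball x r) > 0}"

definition cpow :: "real \<Rightarrow> real \<Rightarrow> ennreal" where
  "cpow a q = (if a = 0 then (if q \<le> 0 then \<infinity> else 0) else ennreal (a powr q))"

definition term_mn :: "'a::metric_space measure \<Rightarrow> 'a measure \<Rightarrow> real \<Rightarrow> real \<Rightarrow> real
    \<Rightarrow> 'a \<times> real \<Rightarrow> ennreal" where
  "term_mn \<mu> \<nu> q t s p = cpow (measure \<mu> (cball (fst p) (snd p))) q
      * cpow (measure \<nu> (cball (fst p) (snd p))) t * ennreal ((2 * snd p) powr s)"

definition centered_packing :: "'a::metric_space set \<Rightarrow> real \<Rightarrow> ('a \<times> real) set \<Rightarrow> bool" where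
  "centered_packing E \<delta> P \<longleftrightarrow> countable P \<and>
     (\<forall>(x,r)\<in>P. x \<in> E \<and> 0 < r \<and> r \<le> \<delta>) \<and>
     (\<forall>p\<in>P. \<forall>p'\<in>P. p \<noteq> p' \<longrightarrow> cball (fst p) (snd p) \<inter> cball (fst p') (snd p') = {})"

definition centered_covering :: "'a::metric_space set \<Rightarrow> real \<Rightarrow> ('a \<times> real) set \<Rightarrow> bool" where
  "centered_covering E \<delta> P \<longleftrightarrow> countable P \<and>
     (\<forall>(x,r)\<in>P. x \<in> E \<and> 0 < r \<and> r \<le> \<delta>) \<and>
     E \<subseteq> (\<Union>p\<in>P. cball (fst p) (snd p))"

definition Pbar_delta :: "'a::metric_space measure \<Rightarrow> 'a measure \<Rightarrow> real \<Rightarrow> real \<Rightarrow> real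
    \<Rightarrow> real \<Rightarrow> 'a set \<Rightarrow> ennreal" where
  "Pbar_delta \<mu> \<nu> q t s \<delta> E =
     (SUP P\<in>{P. centered_packing E \<delta> P}. \<Sum>\<^sub>\<infinity>p\<in>P. term_mn \<mu> \<nu> q t s p)"

definition Pbar :: "'a::metric_space measure \<Rightarrow> 'a measure \<Rightarrow> real \<Rightarrow> real \<Rightarrow> real
    \<Rightarrow> 'a set \<Rightarrow> ennreal" where
  "Pbar \<mu> \<nu> q t s E = (INF \<delta>\<in>{0<..}. Pbar_delta \<mu> \<nu> q t s \<delta> E)"

definition Pmeas :: "'a::metric_space measure \<Rightarrow> 'a measure \<Rightarrow> real \<Rightarrow> real \<Rightarrow> real
    \<Rightarrow> 'a set \<Rightarrow> ennreal" where
  "Pmeas \<mu> \<nu> q t s E =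
     (INF A\<in>{A :: nat \<Rightarrow> 'a set. E \<subseteq> (\<Union>i. A i)}. \<Sum>i. Pbar \<mu> \<nu> q t s (A i))"

definition Hbar_delta :: "'a::metric_space measure \<Rightarrow> 'a measure \<Rightarrow> real \<Rightarrow> real \<Rightarrow> real
    \<Rightarrow> real \<Rightarrow> 'a set \<Rightarrow> ennreal" where
  "Hbar_delta \<mu> \<nu> q t s \<delta> E =
     (INF P\<in>{P. centered_covering E \<delta> P}. \<Sum>\<^sub>\<infinity>p\<in>P. term_mn \<mu> \<nu> q t s p)"

definition Hbar :: "'a::metric_space measure \<Rightarrow> 'a measure \<Rightarrow> real \<Rightarrow> real \<Rightarrow> real
    \<Rightarrow> 'a set \<Rightarrow> ennreal" where
  "Hbar \<mu> \<nu> q t s E = (SUP \<delta>\<in>{0<..}. Hbar_delta \<mu> \<nu> q t s \<delta> E)"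

definition Hmeas :: "'a::metric_space measure \<Rightarrow> 'a measure \<Rightarrow> real \<Rightarrow> real \<Rightarrow> real
    \<Rightarrow> 'a set \<Rightarrow> ennreal" where
  "Hmeas \<mu> \<nu> q t s E = (SUP F\<in>{F. F \<subseteq> E}. Hbar \<mu> \<nu> q t s F)"

definition Bdim :: "'a::metric_space measure \<Rightarrow> 'a measure \<Rightarrow> real \<Rightarrow> real \<Rightarrow> 'a set \<Rightarrow> ereal" where
  "Bdim \<mu> \<nu> q t E = Inf {ereal s | s. Pmeas \<mu> \<nu> q t s E = 0}"

definition Bmunu :: "'a::metric_space measure \<Rightarrow> 'a measure \<Rightarrow> real \<Rightarrow> real \<Rightarrow> ereal" where
  "Bmunu \<mu> \<nu> q t = Bdim \<mu> \<nu> q t (msupp \<mu> \<inter> msupp \<nu>)"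

definition Eset :: "'a::metric_space measure \<Rightarrow> 'a measure \<Rightarrow> real \<Rightarrow> real \<Rightarrow> 'a set" where
  "Eset \<mu> \<nu> \<alpha> \<beta> = {x \<in> msupp \<mu> \<inter> msupp \<nu>.
      ((\<lambda>r. ln (measure \<mu> (cball x r)) / ln r) \<longlongrightarrow> \<alpha>) (at_right 0) \<and>
      ((\<lambda>r. ln (measure \<nu> (cball x r)) / ln r) \<longlongrightarrow> \<beta>) (at_right 0)}"

end

theory Submission
  imports Defs
begin

lemma sep_bound:
  fixes K :: "'a::metric_space set"
  assumes "compact K" "e > 0"
  shows "\<exists>N::nat. \<forall>X. X \<subseteq> K \<and> (\<forall>x\<in>X. \<forall>y\<in>X. x \<noteq> y \<longrightarrow> e \<le> dist x y) \<longrightarrow> finite X \<and> card X \<le> N"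
proof -
  obtain T where T: "T \<subseteq> K" "finite T" "K \<subseteq> (\<Union>t\<in>T. ball t (e/2))"
    using compactE_image[OF assms(1), of K "\<lambda>t. ball t (e/2)"] assms(2) by force
  show ?thesis
  proof (intro exI allI impI)
    fix X assume X: "X \<subseteq> K \<and> (\<forall>x\<in>X. \<forall>y\<in>X. x \<noteq> y \<longrightarrow> e \<le> dist x y)"
    define f where "f x = (SOME t. t \<in> T \<and> dist t x < e/2)" for x
    have f: "f x \<in> T \<and> dist (f x) x < e/2" if "x \<in> X" for x
    proof -
      have "x \<in> K" using X that by auto
      then have "\<exists>t. t \<in> T \<and> dist t x < e/2" using T(3) unfolding subset_eq by (metis UN_E mem_ball)
      then show ?thesis unfolding f_def by (rule someI_ex)
    qed
    have inj: "inj_on f X"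
    proof (rule inj_onI, rule ccontr)
      fix x y assume "x \<in> X" "y \<in> X" "f x = f y" "x \<noteq> y"
      then have "e \<le> dist x y" using X by blast
      moreover have "dist x y \<le> dist (f x) x + dist (f y) y"
        using \<open>f x = f y\<close> dist_triangle3[of x y "f x"] by (simp add: dist_commute)
      ultimately show False using f[OF \<open>x\<in>X\<close>] f[OF \<open>y\<in>X\<close>] by linarith
    qed
    have sub: "f ` X \<subseteq> T" using f by auto
    have "finite X" using inj sub T(2) finite_imageD finite_subset by blast
    moreover have "card X \<le> card T"
      using card_inj_on_le[OF inj sub T(2)] .
    ultimately show "finite X \<and> card X \<le> card T" by simp
  qed
qed

lemma angle_core:
  fixes da db ra rb \<rho> p :: real
  assumes "\<rho> > 0" "ra > 3*\<rho>" "rb > 3*\<rho>" "ra < da" "da \<le> ra + \<rho>" "rb < db" "db \<le> rb + \<rho>"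
    "3 * rb < 4 * ra" "ra^2 < da^2 + db^2 - 2*p" "p \<ge> 9/10 * (da * db)"
  shows False
proof (cases "db \<le> da")
  case True
  define R where "R = ra + \<rho>"
  define W where "W = (R - da) * (R + da - 18/10 * db)"
  have h1: "W \<ge> 0"
    using assms True unfolding R_def W_def by (intro mult_nonneg_nonneg) auto
  have h2: "db * db \<le> db * R" using assms True unfolding R_def by (intro mult_left_mono) auto
  have h3: "\<rho> * R \<le> (1/3) * (db * R)" using assms unfolding R_def by (simp add: mult_right_mono)
  have i1: "R^2 - 18/10*(db*R) + db^2 - (da^2 + db^2 - 18/10*(da*db)) = W"
    unfolding W_def by algebra
  have i2: "ra^2 - (R^2 - 18/10 * (db * R) + db^2) = 18/10 * (db * R) - db * db - 2 * (\<rho> * R) + \<rho> * \<rho>"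
    unfolding R_def by algebra
  have i3: "db^2 = db * db" by algebra
  have i4: "db * R \<ge> 0" using assms unfolding R_def by simp
  have "\<rho> * \<rho> > 0" using assms by simp
  then show False using assms h1 h2 h3 i1 i2 i3 i4 by linarith
next
  case False
  have d0: "0 < db - da" using False by linarith
  have d1: "db - da < 2/3 * ra" using assms by linarith
  have h1: "(db - da) * (db - da) \<le> (2/3*ra) * (2/3*ra)" using d0 d1 by (intro mult_mono) auto
  have h2: "da * db \<le> (4/3*ra) * (5/3*ra)" using assms by (intro mult_mono) auto
  have i1: "da^2 + db^2 - 18/10*(da*db) = (db - da) * (db - da) + 2/10 * (da * db)" by algebra
  have i2: "(2/3*ra) * (2/3*ra) = 4/9 * ra^2" "(4/3*ra) * (5/3*ra) = 20/9*ra^2" by algebra+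
  have "ra^2 > 0" using assms by simp
  then show False using assms h1 h2 i1 i2 by linarith
qed

lemma cball_meet_dist:
  fixes a b :: "'a::metric_space"
  assumes "cball a r \<inter> cball b s \<noteq> {}"
  shows "dist a b \<le> r + s"
proof -
  obtain z where "dist a z \<le> r" "dist b z \<le> s" using assms by auto
  then show ?thesis using dist_triangle3[of a b z] dist_commute[of z a] dist_commute[of z b] by linarith
qed

lemma normdiff_sq:
  fixes a b :: "'a::real_inner"
  shows "norm (a - b)^2 = norm a^2 + norm b^2 - 2 * (a \<bullet> b)"
  using dot_norm_neg[of a b] by (simp add: field_simps)

lemma unit_sep:
  fixes vi vj :: "'a::euclidean_space"
  assumes "vi \<noteq> 0" "vj \<noteq> 0"
    and "dist ((1/norm vi) *\<^sub>R vi) ((1/norm vj) *\<^sub>R vj) < 2/5"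
  shows "vi \<bullet> vj \<ge> 9/10 * (norm vi * norm vj)"
proof -
  let ?ui = "(1/norm vi) *\<^sub>R vi" and ?uj = "(1/norm vj) *\<^sub>R vj"
  have ni: "norm ?ui = 1" "norm ?uj = 1" using assms by auto
  have "norm (?ui - ?uj)^2 = norm ?ui ^2 + norm ?uj^2 - 2 * (?ui \<bullet> ?uj)"
    by (rule normdiff_sq)
  then have e: "norm (?ui - ?uj)^2 = 1 + 1 - 2 * (?ui \<bullet> ?uj)" unfolding ni by (simp only: power_one)
  have "norm (?ui - ?uj) < 2/5" using assms(3) by (simp add: dist_norm)
  then have "norm (?ui - ?uj)^2 < (2/5)^2"
    by (intro power_strict_mono) auto
  moreover have "(2/5::real)^2 = 4/25" by (simp add: power2_eq_square)
  ultimately have "?ui \<bullet> ?uj > 9/10" using e by linarith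
  moreover have "?ui \<bullet> ?uj = (vi \<bullet> vj) / (norm vi * norm vj)" by simp
  ultimately have "(vi \<bullet> vj) / (norm vi * norm vj) > 9/10" by (simp add: mult.commute)
  moreover have "norm vi * norm vj > 0" using assms by simp
  ultimately show ?thesis by (simp add: field_simps)
qed

lemma besi_count:
  "\<exists>M::nat. \<forall>(J::nat set) (x::nat \<Rightarrow> 'a::euclidean_space) \<rho> k.
     (\<forall>j\<in>J. \<rho> j > 0) \<and> (\<forall>i\<in>J. \<forall>j\<in>J. i<j \<longrightarrow> \<rho> i < dist (x i) (x j) \<and> 3 * \<rho> j < 4 * \<rho> i) \<and> k \<in> J \<longrightarrow>
     finite {i\<in>J. i<k \<and> cball (x i) (\<rho> i) \<inter> cball (x k) (\<rho> k) \<noteq> {}} \<and>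
     card {i\<in>J. i<k \<and> cball (x i) (\<rho> i) \<inter> cball (x k) (\<rho> k) \<noteq> {}} \<le> M"
proof -
  have "\<exists>N::nat. \<forall>X. X \<subseteq> cball (0::'a) 4 \<and> (\<forall>x\<in>X. \<forall>y\<in>X. x \<noteq> y \<longrightarrow> 3/4 \<le> dist x y) \<longrightarrow> finite X \<and> card X \<le> N"
    by (rule sep_bound) auto
  then obtain N1 where N10: "\<forall>X. X \<subseteq> cball (0::'a) 4 \<and> (\<forall>x\<in>X. \<forall>y\<in>X. x \<noteq> y \<longrightarrow> 3/4 \<le> dist x y) \<longrightarrow> finite X \<and> card X \<le> N1"
    by blast
  have N1: "finite X \<and> card X \<le> N1" if "X \<subseteq> cball (0::'a) 4" "\<forall>x\<in>X. \<forall>y\<in>X. x \<noteq> y \<longrightarrow> 3/4 \<le> dist x y" for X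
    using N10 that by blast
  have "\<exists>N::nat. \<forall>X. X \<subseteq> cball (0::'a) 1 \<and> (\<forall>x\<in>X. \<forall>y\<in>X. x \<noteq> y \<longrightarrow> 2/5 \<le> dist x y) \<longrightarrow> finite X \<and> card X \<le> N"
    by (rule sep_bound) auto
  then obtain N2 where N20: "\<forall>X. X \<subseteq> cball (0::'a) 1 \<and> (\<forall>x\<in>X. \<forall>y\<in>X. x \<noteq> y \<longrightarrow> 2/5 \<le> dist x y) \<longrightarrow> finite X \<and> card X \<le> N2"
    by blast
  have N2: "finite X \<and> card X \<le> N2" if "X \<subseteq> cball (0::'a) 1" "\<forall>x\<in>X. \<forall>y\<in>X. x \<noteq> y \<longrightarrow> 2/5 \<le> dist x y" for X
    using N20 that by blast
  show ?thesis
  proof (rule exI[of _ "N1 + N2"], intro allI impI)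
    fix J and x :: "nat \<Rightarrow> 'a" and \<rho> k
    assume A: "(\<forall>j\<in>J. \<rho> j > 0) \<and> (\<forall>i\<in>J. \<forall>j\<in>J. i<j \<longrightarrow> \<rho> i < dist (x i) (x j) \<and> 3 * \<rho> j < 4 * \<rho> i) \<and> k \<in> J"
    then have pos: "\<And>j. j \<in> J \<Longrightarrow> \<rho> j > 0" and sep: "\<And>i j. i \<in> J \<Longrightarrow> j \<in> J \<Longrightarrow> i < j \<Longrightarrow> \<rho> i < dist (x i) (x j)"
      and rat: "\<And>i j. i \<in> J \<Longrightarrow> j \<in> J \<Longrightarrow> i < j \<Longrightarrow> 3 * \<rho> j < 4 * \<rho> i" and kJ: "k \<in> J" by auto
    define I where "I = {i\<in>J. i<k \<and> cball (x i) (\<rho> i) \<inter> cball (x k) (\<rho> k) \<noteq> {}}"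
    define I1 where "I1 = {i\<in>I. \<rho> i \<le> 3 * \<rho> k}"
    define I2 where "I2 = {i\<in>I. \<rho> i > 3 * \<rho> k}"
    have II: "I = I1 \<union> I2" unfolding I1_def I2_def by auto
    have Iprops: "i \<in> J" "i < k" "dist (x i) (x k) \<le> \<rho> i + \<rho> k" "\<rho> i < dist (x i) (x k)" "3 * \<rho> k < 4 * \<rho> i"
      if "i \<in> I" for i
    proof -
      have i: "i \<in> J" "i < k" "cball (x i) (\<rho> i) \<inter> cball (x k) (\<rho> k) \<noteq> {}" using that unfolding I_def by blast+
      show "i \<in> J" "i < k" using i by simp_all
      show "dist (x i) (x k) \<le> \<rho> i + \<rho> k" using cball_meet_dist[OF i(3)] .
      show "\<rho> i < dist (x i) (x k)" "3 * \<rho> k < 4 * \<rho> i" using sep[OF i(1) kJ i(2)] rat[OF i(1) kJ i(2)] by simp_all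
    qed
    have rk: "\<rho> k > 0" using pos kJ by auto
    define y where "y i = (1/\<rho> k) *\<^sub>R (x i - x k)" for i
    have ydist: "dist (y i) (y j) = dist (x i) (x j) / \<rho> k" for i j
    proof -
      have "y i - y j = (1/\<rho> k) *\<^sub>R (x i - x j)" unfolding y_def by (simp add: algebra_simps)
      then show ?thesis using rk by (simp add: dist_norm)
    qed
    have y1: "y i \<noteq> y j \<and> 3/4 \<le> dist (y i) (y j)" if "i \<in> I1" "j \<in> I1" "i < j" for i j
    proof -
      have "\<rho> i < dist (x i) (x j)" using sep[of i j] that Iprops unfolding I1_def by auto
      moreover have "3 * \<rho> k < 4 * \<rho> i" using that Iprops unfolding I1_def by auto
      ultimately have "3/4 * \<rho> k < dist (x i) (x j)" by linarith
      then have "3/4 < dist (x i) (x j) / \<rho> k" using rk by (simp add: field_simps)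
      then have "3/4 < dist (y i) (y j)" using ydist[of i j] by simp
      then show ?thesis by auto
    qed
    have y1': "y i \<noteq> y j \<and> 3/4 \<le> dist (y i) (y j)" if "i \<in> I1" "j \<in> I1" "i \<noteq> j" for i j
      using y1[of i j] y1[of j i] that by (cases "i < j") (auto simp: dist_commute)
    have injy: "inj_on y I1"
    proof (rule inj_onI)
      fix i j assume "i \<in> I1" "j \<in> I1" "y i = y j"
      then show "i = j" using y1'[of i j] by blast
    qed
    have ysub: "y ` I1 \<subseteq> cball 0 4"
    proof
      fix z assume "z \<in> y ` I1"
      then obtain i where i: "i \<in> I1" "z = y i" by auto
      have "dist (x i) (x k) \<le> 4 * \<rho> k" using Iprops[of i] i unfolding I1_def by auto
      then have "dist (x i) (x k) / \<rho> k \<le> 4" using rk by (simp add: field_simps)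
      moreover have "y k = 0" unfolding y_def by simp
      ultimately show "z \<in> cball 0 4" using ydist[of i k] i by (simp add: dist_commute)
    qed
    have "finite (y ` I1) \<and> card (y ` I1) \<le> N1"
      by (rule N1[OF ysub]) (use y1' in auto)
    then have F1: "finite I1 \<and> card I1 \<le> N1" using injy finite_imageD card_image by metis
    define u where "u i = (1/norm (x i - x k)) *\<^sub>R (x i - x k)" for i
    have nz: "x i - x k \<noteq> 0" if "i \<in> I" for i
      using Iprops[OF that] pos[of i] by auto
    have u2: "u i \<noteq> u j \<and> 2/5 \<le> dist (u i) (u j)" if "i \<in> I2" "j \<in> I2" "i < j" for i j
    proof -
      have iI: "i \<in> I" and jI: "j \<in> I" using that unfolding I2_def by auto
      have "\<not> dist (u i) (u j) < 2/5"
      proof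
        assume "dist (u i) (u j) < 2/5"
        then have p: "(x i - x k) \<bullet> (x j - x k) \<ge> 9/10 * (norm (x i - x k) * norm (x j - x k))"
          using unit_sep[OF nz[OF iI] nz[OF jI]] unfolding u_def by blast
        have e: "norm ((x j - x k) - (x i - x k))^2 = norm (x i - x k)^2 + norm (x j - x k)^2 - 2 * ((x i - x k) \<bullet> (x j - x k))"
          using normdiff_sq[of "x j - x k" "x i - x k"] by (simp add: inner_commute)
        have "\<rho> i < dist (x i) (x j)" using sep[of i j] that Iprops[OF iI] Iprops[OF jI] by auto
        moreover have "dist (x i) (x j) = norm ((x j - x k) - (x i - x k))"
          by (simp add: dist_norm norm_minus_commute)
        moreover have "\<rho> i \<ge> 0" using pos[of i] Iprops(1)[OF iI] by simp
        ultimately have "\<rho> i ^2 < norm ((x j - x k) - (x i - x k))^2"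
          by (metis power_strict_mono zero_less_numeral)
        then have "\<rho> i ^2 < norm (x i - x k)^2 + norm (x j - x k)^2 - 2 * ((x i - x k) \<bullet> (x j - x k))"
          using e by simp
        moreover have "3 * \<rho> j < 4 * \<rho> i" using rat[of i j] that Iprops[OF iI] Iprops[OF jI] by auto
        moreover have "\<rho> i > 3 * \<rho> k" "\<rho> j > 3 * \<rho> k" using that unfolding I2_def by auto
        moreover have "norm (x i - x k) = dist (x i) (x k)" "norm (x j - x k) = dist (x j) (x k)"
          by (simp_all add: dist_norm)
        ultimately show False
          using angle_core[of "\<rho> k" "\<rho> i" "\<rho> j" "norm (x i - x k)" "norm (x j - x k)" "(x i - x k) \<bullet> (x j - x k)"]
            rk p Iprops(3,4)[OF iI] Iprops(3,4)[OF jI] by linarith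
      qed
      then show ?thesis by auto
    qed
    have u2': "u i \<noteq> u j \<and> 2/5 \<le> dist (u i) (u j)" if "i \<in> I2" "j \<in> I2" "i \<noteq> j" for i j
      using u2[of i j] u2[of j i] that by (cases "i < j") (auto simp: dist_commute)
    have inju: "inj_on u I2"
    proof (rule inj_onI)
      fix i j assume "i \<in> I2" "j \<in> I2" "u i = u j"
      then show "i = j" using u2'[of i j] by blast
    qed
    have usub: "u ` I2 \<subseteq> cball 0 1"
    proof
      fix z assume "z \<in> u ` I2"
      then obtain i where i: "i \<in> I2" "z = u i" by auto
      then have "i \<in> I" unfolding I2_def by auto
      then have "norm (u i) = 1" using nz unfolding u_def by auto
      then show "z \<in> cball 0 1" using i by simp
    qed
    have "finite (u ` I2) \<and> card (u ` I2) \<le> N2"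
      by (rule N2[OF usub]) (use u2' in auto)
    then have F2: "finite I2 \<and> card I2 \<le> N2" using inju finite_imageD card_image by metis
    have "finite I" using F1 F2 II by auto
    moreover have "card I \<le> N1 + N2"
    proof -
      have "card I \<le> card I1 + card I2" unfolding II by (rule card_Un_le)
      then show ?thesis using F1 F2 by linarith
    qed
    ultimately show "finite {i\<in>J. i<k \<and> cball (x i) (\<rho> i) \<inter> cball (x k) (\<rho> k) \<noteq> {}} \<and>
     card {i\<in>J. i<k \<and> cball (x i) (\<rho> i) \<inter> cball (x k) (\<rho> k) \<noteq> {}} \<le> N1 + N2"
      unfolding I_def by simp
  qed
qed

definition rem_set :: "'a::metric_space set \<Rightarrow> ('a \<Rightarrow> real) \<Rightarrow> 'a list \<Rightarrow> 'a set" where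
  "rem_set A r cs = A - (\<Union>y\<in>set cs. cball y (r y))"

definition pick :: "('a \<Rightarrow> real) \<Rightarrow> 'a set \<Rightarrow> 'a" where
  "pick r X = (SOME a. a \<in> X \<and> 3 * (SUP y\<in>X. r y) < 4 * r a)"

definition bstep :: "'a::metric_space set \<Rightarrow> ('a \<Rightarrow> real) \<Rightarrow> 'a list \<Rightarrow> 'a list" where
  "bstep A r cs = (if rem_set A r cs = {} then cs else cs @ [pick r (rem_set A r cs)])"

definition good_list :: "'a::metric_space set \<Rightarrow> ('a \<Rightarrow> real) \<Rightarrow> 'a list \<Rightarrow> bool" where
  "good_list A r cs \<longleftrightarrow> (\<forall>i<length cs. cs!i \<in> rem_set A r (take i cs) \<and>
      3 * (SUP y\<in>rem_set A r (take i cs). r y) < 4 * r (cs!i))"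

lemma pick_prop:
  assumes "X \<subseteq> A" "X \<noteq> {}" "\<forall>x\<in>A. 0 < r x \<and> r x \<le> R"
  shows "pick r X \<in> X \<and> 3 * (SUP y\<in>X. r y) < 4 * r (pick r X)"
proof -
  have bdd: "bdd_above (r ` X)" using assms by (intro bdd_aboveI[of _ R]) auto
  obtain x0 where x0: "x0 \<in> X" using assms by auto
  have "r x0 \<le> (SUP y\<in>X. r y)" using bdd x0 by (intro cSUP_upper)
  then have Spos: "(SUP y\<in>X. r y) > 0" using assms x0 by force
  then have "3/4 * (SUP y\<in>X. r y) < (SUP y\<in>X. r y)" by simp
  then obtain a where "a \<in> X" "3/4 * (SUP y\<in>X. r y) < r a"
    using less_cSUP_iff[of X r] x0 bdd by blast
  then have "\<exists>a. a \<in> X \<and> 3 * (SUP y\<in>X. r y) < 4 * r a" by (intro exI[of _ a]) auto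
  then show ?thesis unfolding pick_def by (rule someI_ex)
qed

lemma rem_set_mono:
  assumes "set cs \<subseteq> set ds"
  shows "rem_set A r ds \<subseteq> rem_set A r cs"
  using assms unfolding rem_set_def by auto

lemma good_step:
  assumes "good_list A r cs" "\<forall>x\<in>A. 0 < r x \<and> r x \<le> R"
  shows "good_list A r (bstep A r cs)"
proof (cases "rem_set A r cs = {}")
  case True
  then show ?thesis using assms unfolding bstep_def by simp
next
  case False
  let ?a = "pick r (rem_set A r cs)"
  have pa: "?a \<in> rem_set A r cs \<and> 3 * (SUP y\<in>rem_set A r cs. r y) < 4 * r ?a"
    by (rule pick_prop[OF _ False assms(2)]) (auto simp: rem_set_def)
  have "good_list A r (cs @ [?a])"
    unfolding good_list_def
  proof (intro allI impI)
    fix i assume "i < length (cs @ [?a])"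
    then have "i < length cs \<or> i = length cs" by auto
    then show "(cs @ [?a]) ! i \<in> rem_set A r (take i (cs @ [?a])) \<and>
      3 * (SUP y\<in>rem_set A r (take i (cs @ [?a])). r y) < 4 * r ((cs @ [?a]) ! i)"
    proof
      assume i: "i < length cs"
      then show ?thesis using assms(1) unfolding good_list_def by (simp add: nth_append)
    next
      assume "i = length cs"
      then show ?thesis using pa by simp
    qed
  qed
  then show ?thesis using False unfolding bstep_def by simp
qed

lemma good_props:
  assumes "good_list A r cs" "\<forall>x\<in>A. 0 < r x \<and> r x \<le> R" "i < j" "j < length cs"
  shows "cs!j \<in> A \<and> r (cs!i) < dist (cs!i) (cs!j) \<and> 3 * r (cs!j) < 4 * r (cs!i)"
proof -
  have gj: "cs!j \<in> rem_set A r (take j cs)" using assms unfolding good_list_def by auto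
  have gi: "3 * (SUP y\<in>rem_set A r (take i cs). r y) < 4 * r (cs!i)"
    using assms unfolding good_list_def by auto
  have A: "cs!j \<in> A" using gj unfolding rem_set_def by auto
  have "cs!i \<in> set (take j cs)" using assms by (auto simp: in_set_conv_nth intro!: exI[of _ i])
  then have "cs!j \<notin> cball (cs!i) (r (cs!i))" using gj unfolding rem_set_def by auto
  then have d: "r (cs!i) < dist (cs!i) (cs!j)" by simp
  have "set (take i cs) \<subseteq> set (take j cs)" using assms(3)
    by (metis set_take_subset_set_take less_imp_le)
  then have "cs!j \<in> rem_set A r (take i cs)" using gj rem_set_mono by blast
  moreover have "bdd_above (r ` rem_set A r (take i cs))"
    using assms(2) by (intro bdd_aboveI[of _ R]) (auto simp: rem_set_def)
  ultimately have "r (cs!j) \<le> (SUP y\<in>rem_set A r (take i cs). r y)" by (intro cSUP_upper)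
  then show ?thesis using A d gi by linarith
qed

lemma good_iter: "\<forall>x\<in>A. 0 < r x \<and> r x \<le> R \<Longrightarrow> good_list A r ((bstep A r ^^ n) [])"
proof (induction n)
  case 0 then show ?case by (simp add: good_list_def)
next
  case (Suc n) then show ?case using good_step[of A r _ R] by simp
qed

lemma besi_select:
  fixes A :: "'a::euclidean_space set" and r :: "'a \<Rightarrow> real"
  assumes bA: "bounded A" and rA: "\<forall>x\<in>A. 0 < r x \<and> r x \<le> R"
  shows "\<exists>(J::nat set) (c::nat \<Rightarrow> 'a). (\<forall>j\<in>J. c j \<in> A) \<and>
     (\<forall>i\<in>J. \<forall>j\<in>J. i<j \<longrightarrow> r (c i) < dist (c i) (c j) \<and> 3 * r (c j) < 4 * r (c i)) \<and>
     A \<subseteq> (\<Union>j\<in>J. cball (c j) (r (c j)))"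
proof -
  define L where "L n = (bstep A r ^^ n) []" for n
  have LS: "L (Suc n) = bstep A r (L n)" for n unfolding L_def by simp
  have gL: "good_list A r (L n)" for n unfolding L_def by (rule good_iter[OF rA])
  show ?thesis
  proof (cases "\<exists>n. rem_set A r (L n) = {}")
    case True
    then obtain n where n: "rem_set A r (L n) = {}" by blast
    let ?cs = "L n"
    show ?thesis
    proof (intro exI[of _ "{..<length ?cs}"] exI[of _ "\<lambda>j. ?cs ! j"] conjI ballI impI)
      fix j assume "j \<in> {..<length ?cs}"
      then show "?cs ! j \<in> A"
      proof (cases "j = 0")
        case True
        have "?cs ! 0 \<in> rem_set A r (take 0 ?cs)" using gL[of n] \<open>j \<in> _\<close> True unfolding good_list_def by auto
        then show ?thesis using True unfolding rem_set_def by auto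
      next
        case False
        then show ?thesis using good_props[OF gL[of n] rA, of 0 j] \<open>j \<in> _\<close> by auto
      qed
    next
      fix i j assume "i \<in> {..<length ?cs}" "j \<in> {..<length ?cs}" "i < j"
      then show "r (?cs ! i) < dist (?cs ! i) (?cs ! j)" "3 * r (?cs ! j) < 4 * r (?cs ! i)"
        using good_props[OF gL[of n] rA, of i j] by auto
    next
      show "A \<subseteq> (\<Union>j\<in>{..<length ?cs}. cball (?cs ! j) (r (?cs ! j)))"
      proof
        fix a assume "a \<in> A"
        then obtain y where "y \<in> set ?cs" "a \<in> cball y (r y)" using n unfolding rem_set_def by auto
        then show "a \<in> (\<Union>j\<in>{..<length ?cs}. cball (?cs ! j) (r (?cs ! j)))"
          by (auto simp: in_set_conv_nth)
      qed
    qed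
  next
    case False
    then have ne: "rem_set A r (L n) \<noteq> {}" for n by blast
    have LS': "L (Suc n) = L n @ [pick r (rem_set A r (L n))]" for n
      using ne[of n] unfolding LS bstep_def by simp
    have len: "length (L n) = n" for n by (induction n) (auto simp: LS' L_def[of 0])
    define c where "c j = L (Suc j) ! j" for j
    have Lnth: "L m ! i = c i" if "i < m" for i m
      using that
    proof (induction m)
      case 0 then show ?case by simp
    next
      case (Suc m)
      then show ?case
        by (cases "i < m") (auto simp: LS' nth_append len c_def less_Suc_eq)
    qed
    have props: "c j \<in> A \<and> r (c i) < dist (c i) (c j) \<and> 3 * r (c j) < 4 * r (c i)" if "i < j" for i j
      using good_props[OF gL[of "Suc j"] rA, of i j] that Lnth[of i "Suc j"] Lnth[of j "Suc j"] len[of "Suc j"] by auto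
    have c0: "c 0 \<in> A"
    proof -
      have "L 1 ! 0 \<in> rem_set A r (take 0 (L 1))" using gL[of 1] len[of 1] unfolding good_list_def by auto
      then show ?thesis unfolding c_def rem_set_def by auto
    qed
    have cA: "c j \<in> A" for j using props[of 0 j] c0 by (cases j) auto
    have rat_n: "3 * (SUP y\<in>rem_set A r (L n). r y) < 4 * r (c n)" for n
    proof -
      have "3 * (SUP y\<in>rem_set A r (take n (L (Suc n))). r y) < 4 * r (L (Suc n) ! n)"
        using gL[of "Suc n"] len[of "Suc n"] unfolding good_list_def by auto
      moreover have "take n (L (Suc n)) = L n" using LS'[of n] len[of n] by simp
      ultimately show ?thesis unfolding c_def by simp
    qed
    have cover: "A \<subseteq> (\<Union>j. cball (c j) (r (c j)))"
    proof
      fix a assume aA: "a \<in> A"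
      show "a \<in> (\<Union>j. cball (c j) (r (c j)))"
      proof (rule ccontr)
        assume na: "a \<notin> (\<Union>j. cball (c j) (r (c j)))"
        have setL: "set (L n) = c ` {..<n}" for n
          using len[of n] Lnth[of _ n] by (force simp: in_set_conv_nth)
        have arem: "a \<in> rem_set A r (L n)" for n using aA na unfolding rem_set_def setL by auto
        have big: "3 * r a < 4 * r (c n)" for n
        proof -
          have "bdd_above (r ` rem_set A r (L n))"
            using rA by (intro bdd_aboveI[of _ R]) (auto simp: rem_set_def)
          then have "r a \<le> (SUP y\<in>rem_set A r (L n). r y)" using arem by (intro cSUP_upper)
          then show ?thesis using rat_n[of n] by linarith
        qed
        define e where "e = 3/4 * r a"
        have epos: "e > 0" using rA aA unfolding e_def by auto
        have sepc: "e \<le> dist (c i) (c j)" if "i < j" for i j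
          using props[OF that] big[of i] unfolding e_def by linarith
        have sepc': "c i \<noteq> c j \<and> e \<le> dist (c i) (c j)" if "i \<noteq> j" for i j
          using sepc[of i j] sepc[of j i] that epos by (cases "i < j") (auto simp: dist_commute)
        obtain K where K0: "\<forall>x\<in>A. norm x \<le> K" using bA unfolding bounded_iff by blast
        have K: "A \<subseteq> cball 0 K" using K0 by auto
        have "\<exists>N::nat. \<forall>X. X \<subseteq> cball (0::'a) K \<and> (\<forall>x\<in>X. \<forall>y\<in>X. x \<noteq> y \<longrightarrow> e \<le> dist x y) \<longrightarrow> finite X \<and> card X \<le> N"
          by (rule sep_bound[OF compact_cball epos])
        then obtain N where N: "\<forall>X. X \<subseteq> cball (0::'a) K \<and> (\<forall>x\<in>X. \<forall>y\<in>X. x \<noteq> y \<longrightarrow> e \<le> dist x y) \<longrightarrow> finite X \<and> card X \<le> N"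
          by blast
        have "range c \<subseteq> cball 0 K" using cA K by auto
        moreover have "\<forall>x\<in>range c. \<forall>y\<in>range c. x \<noteq> y \<longrightarrow> e \<le> dist x y" using sepc' by (metis imageE)
        ultimately have "finite (range c)" using N[rule_format, of "range c"] by simp
        moreover have "inj c"
        proof (rule injI)
          fix i j assume "c i = c j" then show "i = j" using sepc'[of i j] by blast
        qed
        ultimately show False using finite_imageD by fastforce
      qed
    qed
    show ?thesis
      by (intro exI[of _ UNIV] exI[of _ c]) (use cA props cover in auto)
  qed
qed

lemma ennreal_sum_le_infsum:
  fixes f :: "'b \<Rightarrow> ennreal"
  assumes "finite F" "F \<subseteq> A"
  shows "sum f F \<le> infsum f A"
proof -
  have "infsum f A = (SUP F\<in>{F. finite F \<and> F\<subseteq>A}. sum f F)"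
    by (rule nonneg_infsum_complete) simp
  moreover have "sum f F \<le> (SUP F\<in>{F. finite F \<and> F\<subseteq>A}. sum f F)"
    using assms by (intro SUP_upper) auto
  ultimately show ?thesis by simp
qed

lemma infsum_UN_le:
  fixes f :: "'b \<Rightarrow> ennreal" and P :: "nat \<Rightarrow> 'b set"
  shows "infsum f (\<Union>m. P m) \<le> (\<Sum>m. infsum f (P m))"
proof (rule infsum_le_finite_sums)
  show "f summable_on (\<Union>m. P m)" by (rule nonneg_summable_on_complete) simp
  fix F assume F: "finite F" "F \<subseteq> (\<Union>m. P m)"
  have "\<forall>x\<in>F. \<exists>m. x \<in> P m" using F by auto
  then obtain mm where mm: "\<And>x. x \<in> F \<Longrightarrow> x \<in> P (mm x)" by metis
  define K where "K = Suc (Max (mm ` F \<union> {0}))"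
  have mK: "mm x < K" if "x \<in> F" for x
    unfolding K_def using F(1) that by (simp add: le_imp_less_Suc)
  define I where "I = Sigma {..<K} (\<lambda>m. F \<inter> P m)"
  have fI: "finite I" unfolding I_def using F(1) by auto
  have imI: "snd ` I = F"
  proof
    show "snd ` I \<subseteq> F" unfolding I_def by auto
    show "F \<subseteq> snd ` I"
    proof
      fix x assume "x \<in> F"
      then have "(mm x, x) \<in> I" unfolding I_def using mm mK by auto
      then show "x \<in> snd ` I" by force
    qed
  qed
  have "sum f F = sum f (snd ` I)" using imI by simp
  also have "\<dots> \<le> sum (f \<circ> snd) I" by (rule sum_image_le[OF fI]) simp
  also have "\<dots> = (\<Sum>m<K. sum f (F \<inter> P m))"
    unfolding I_def using F(1) by (subst sum.Sigma) (auto simp: case_prod_beta comp_def)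
  also have "\<dots> \<le> (\<Sum>m<K. infsum f (P m))"
    by (intro sum_mono ennreal_sum_le_infsum) (use F(1) in auto)
  also have "\<dots> \<le> (\<Sum>m. infsum f (P m))"
    by (intro sum_le_suminf) auto
  finally show "sum f F \<le> (\<Sum>m. infsum f (P m))" .
qed

lemma coloring:
  fixes J :: "nat set" and adj :: "nat \<Rightarrow> nat \<Rightarrow> bool"
  assumes "\<forall>k\<in>J. finite {i\<in>J. i<k \<and> adj i k} \<and> card {i\<in>J. i<k \<and> adj i k} \<le> M"
  shows "\<exists>col. \<forall>j\<in>J. col j \<le> M \<and> (\<forall>i\<in>J. i<j \<and> adj i j \<longrightarrow> col i \<noteq> col j)"
proof -
  define nxt where "nxt j l = (LEAST c. c \<notin> (\<lambda>i. l ! i) ` {i\<in>J. i<j \<and> adj i j})" for j and l :: "nat list"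
  define cl where "cl = rec_nat [] (\<lambda>j l. l @ [nxt j l])"
  have cl0: "cl 0 = []" and clS: "cl (Suc j) = cl j @ [nxt j (cl j)]" for j unfolding cl_def by simp_all
  have len: "length (cl n) = n" for n by (induction n) (simp_all add: cl0 clS)
  define col where "col j = cl (Suc j) ! j" for j
  have clnth: "cl m ! i = col i" if "i < m" for i m
    using that
  proof (induction m)
    case 0 then show ?case by simp
  next
    case (Suc m)
    then show ?case by (cases "i < m") (auto simp: clS nth_append len col_def less_Suc_eq)
  qed
  have colj: "col j = (LEAST c. c \<notin> col ` {i\<in>J. i<j \<and> adj i j})" for j
  proof -
    have "col j = nxt j (cl j)" unfolding col_def clS by (metis len nth_append_length)
    also have "(\<lambda>i. cl j ! i) ` {i\<in>J. i<j \<and> adj i j} = col ` {i\<in>J. i<j \<and> adj i j}"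
      using clnth[of _ j] by (intro image_cong) auto
    then have "nxt j (cl j) = (LEAST c. c \<notin> col ` {i\<in>J. i<j \<and> adj i j})" unfolding nxt_def by simp
    finally show ?thesis .
  qed
  show ?thesis
  proof (intro exI[of _ col] ballI conjI allI impI)
    fix j assume jJ: "j \<in> J"
    let ?F = "{i\<in>J. i<j \<and> adj i j}"
    have fF: "finite ?F" "card ?F \<le> M" using assms jJ by auto
    have "card (col ` ?F) \<le> M" using card_image_le[OF fF(1), of col] fF(2) by linarith
    then have "\<not> {0..M} \<subseteq> col ` ?F"
      using card_mono[OF finite_imageI[OF fF(1)]] by fastforce
    then obtain c0 where c0: "c0 \<le> M" "c0 \<notin> col ` ?F" by (auto simp: subset_eq)
    have "(LEAST c. c \<notin> col ` ?F) \<le> c0" using c0(2) by (rule Least_le)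
    then show "col j \<le> M" using colj[of j] c0(1) by simp
    have "col j \<notin> col ` ?F" unfolding colj[of j] using c0(2) by (rule LeastI)
    then show "col i \<noteq> col j" if "i \<in> J" "i < j \<and> adj i j" for i
      using that by (metis (mono_tags, lifting) image_eqI mem_Collect_eq)
  qed
qed

lemma cover_pack:
  "\<exists>Nc::nat. \<forall>(G::'a::euclidean_space set) \<delta> r (f::'a\<times>real \<Rightarrow> ennreal) g C.
     bounded G \<and> (\<forall>x\<in>G. 0 < r x \<and> r x \<le> \<delta> \<and> f (x, r x) \<le> C * g (x, r x)) \<longrightarrow>
     (\<exists>P. centered_covering G \<delta> P \<and>
        infsum f P \<le> of_nat Nc * C * (SUP Q\<in>{Q. centered_packing G \<delta> Q}. infsum g Q))"
proof -
  obtain M where M: "\<forall>(J::nat set) (x::nat \<Rightarrow> 'a) \<rho> k.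
     (\<forall>j\<in>J. \<rho> j > 0) \<and> (\<forall>i\<in>J. \<forall>j\<in>J. i<j \<longrightarrow> \<rho> i < dist (x i) (x j) \<and> 3 * \<rho> j < 4 * \<rho> i) \<and> k \<in> J \<longrightarrow>
     finite {i\<in>J. i<k \<and> cball (x i) (\<rho> i) \<inter> cball (x k) (\<rho> k) \<noteq> {}} \<and>
     card {i\<in>J. i<k \<and> cball (x i) (\<rho> i) \<inter> cball (x k) (\<rho> k) \<noteq> {}} \<le> M"
    using besi_count by blast
  show ?thesis
  proof (rule exI[of _ "Suc M"], intro allI impI)
    fix G :: "'a set" and \<delta> r and f g :: "'a\<times>real \<Rightarrow> ennreal" and C
    assume A: "bounded G \<and> (\<forall>x\<in>G. 0 < r x \<and> r x \<le> \<delta> \<and> f (x, r x) \<le> C * g (x, r x))"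
    then have bG: "bounded G" and rG: "\<forall>x\<in>G. 0 < r x \<and> r x \<le> \<delta>"
      and fg: "\<And>x. x \<in> G \<Longrightarrow> f (x, r x) \<le> C * g (x, r x)" by auto
    obtain J and c :: "nat \<Rightarrow> 'a" where
      cG: "\<forall>j\<in>J. c j \<in> G" and
      csep: "\<forall>i\<in>J. \<forall>j\<in>J. i<j \<longrightarrow> r (c i) < dist (c i) (c j) \<and> 3 * r (c j) < 4 * r (c i)" and
      ccov: "G \<subseteq> (\<Union>j\<in>J. cball (c j) (r (c j)))"
      using besi_select[OF bG rG] by blast
    define \<rho> where "\<rho> j = r (c j)" for j
    have cnt: "\<forall>k\<in>J. finite {i\<in>J. i<k \<and> cball (c i) (\<rho> i) \<inter> cball (c k) (\<rho> k) \<noteq> {}} \<and>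
     card {i\<in>J. i<k \<and> cball (c i) (\<rho> i) \<inter> cball (c k) (\<rho> k) \<noteq> {}} \<le> M"
    proof
      fix k assume "k \<in> J"
      moreover have "\<forall>j\<in>J. \<rho> j > 0" using cG rG unfolding \<rho>_def by auto
      ultimately show "finite {i\<in>J. i<k \<and> cball (c i) (\<rho> i) \<inter> cball (c k) (\<rho> k) \<noteq> {}} \<and>
     card {i\<in>J. i<k \<and> cball (c i) (\<rho> i) \<inter> cball (c k) (\<rho> k) \<noteq> {}} \<le> M"
        using M[THEN spec[of _ J], THEN spec[of _ c], THEN spec[of _ \<rho>], THEN spec[of _ k]] csep unfolding \<rho>_def by blast
    qed
    obtain col where col: "\<forall>j\<in>J. col j \<le> M \<and> (\<forall>i\<in>J. i<j \<and> cball (c i) (\<rho> i) \<inter> cball (c j) (\<rho> j) \<noteq> {} \<longrightarrow> col i \<noteq> col j)"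
      using coloring[OF cnt] by blast
    define h where "h j = (c j, \<rho> j)" for j
    define P where "P = h ` J"
    define Pm where "Pm m = h ` {j\<in>J. col j = m}" for m
    define S where "S = (SUP Q\<in>{Q. centered_packing G \<delta> Q}. infsum g Q)"
    have cov: "centered_covering G \<delta> P"
      unfolding centered_covering_def P_def
    proof (intro conjI)
      show "countable (h ` J)" by simp
      show "\<forall>(x, ra)\<in>h ` J. x \<in> G \<and> 0 < ra \<and> ra \<le> \<delta>" using cG rG unfolding h_def \<rho>_def by auto
      show "G \<subseteq> (\<Union>p\<in>h ` J. cball (fst p) (snd p))" using ccov unfolding h_def \<rho>_def by auto
    qed
    have PU: "P = (\<Union>m. Pm m)" unfolding P_def Pm_def by auto
    have Pm_empty: "Pm m = {}" if "m \<notin> {..<Suc M}" for m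
      using that col unfolding Pm_def by fastforce
    have pack: "centered_packing G \<delta> (Pm m)" for m
      unfolding centered_packing_def
    proof (intro conjI)
      show "countable (Pm m)" unfolding Pm_def by simp
      show "\<forall>(x, ra)\<in>Pm m. x \<in> G \<and> 0 < ra \<and> ra \<le> \<delta>" using cG rG unfolding Pm_def h_def \<rho>_def by auto
      show "\<forall>p\<in>Pm m. \<forall>p'\<in>Pm m. p \<noteq> p' \<longrightarrow> cball (fst p) (snd p) \<inter> cball (fst p') (snd p') = {}"
      proof (intro ballI impI)
        fix p p' assume p: "p \<in> Pm m" and p': "p' \<in> Pm m" and ne: "p \<noteq> p'"
        obtain i where i: "i \<in> J" "col i = m" "p = h i" using p unfolding Pm_def by auto
        obtain j where j: "j \<in> J" "col j = m" "p' = h j" using p' unfolding Pm_def by auto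
        have "i \<noteq> j" using ne i j by auto
        then have "i < j \<or> j < i" by auto
        then show "cball (fst p) (snd p) \<inter> cball (fst p') (snd p') = {}"
        proof
          assume ij: "i < j"
          have "\<not> (cball (c i) (\<rho> i) \<inter> cball (c j) (\<rho> j) \<noteq> {})"
            using col i j ij by metis
          then show ?thesis using i j unfolding h_def by simp
        next
          assume ji: "j < i"
          have "\<not> (cball (c j) (\<rho> j) \<inter> cball (c i) (\<rho> i) \<noteq> {})"
            using col i j ji by metis
          then show ?thesis using i j unfolding h_def by (simp add: Int_commute)
        qed
      qed
    qed
    have each: "infsum f (Pm m) \<le> C * S" for m
    proof -
      have "infsum f (Pm m) \<le> infsum (\<lambda>p. C * g p) (Pm m)"
      proof (rule infsum_mono)
        show "f summable_on Pm m" by (rule nonneg_summable_on_complete) simp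
        show "(\<lambda>p. C * g p) summable_on Pm m" by (rule nonneg_summable_on_complete) simp
        fix p assume "p \<in> Pm m"
        then obtain j where "j \<in> J" "p = (c j, r (c j))" unfolding Pm_def h_def \<rho>_def by auto
        then show "f p \<le> C * g p" using fg cG by auto
      qed
      also have "\<dots> \<le> C * infsum g (Pm m)"
      proof (rule infsum_le_finite_sums)
        show "(\<lambda>p. C * g p) summable_on Pm m" by (rule nonneg_summable_on_complete) simp
        fix F assume "finite F" "F \<subseteq> Pm m"
        then have "sum g F \<le> infsum g (Pm m)" by (rule ennreal_sum_le_infsum)
        then show "(\<Sum>p\<in>F. C * g p) \<le> C * infsum g (Pm m)"
          by (simp add: sum_distrib_left[symmetric] mult_left_mono)
      qed
      also have "\<dots> \<le> C * S" unfolding S_def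
        by (intro mult_left_mono SUP_upper) (use pack in auto)
      finally show ?thesis .
    qed
    have "infsum f P \<le> (\<Sum>m. infsum f (Pm m))" unfolding PU by (rule infsum_UN_le)
    also have "\<dots> = (\<Sum>m<Suc M. infsum f (Pm m))"
      by (rule suminf_finite) (auto simp: Pm_empty)
    also have "\<dots> \<le> (\<Sum>m<Suc M. C * S)" by (intro sum_mono each)
    also have "\<dots> = of_nat (Suc M) * C * S" by (simp add: mult.assoc)
    finally show "\<exists>P. centered_covering G \<delta> P \<and>
        infsum f P \<le> of_nat (Suc M) * C * (SUP Q\<in>{Q. centered_packing G \<delta> Q}. infsum g Q)"
      using cov unfolding S_def by blast
  qed
qed

lemma ennreal_mult_INF:
  fixes K :: ennreal and f :: "'b \<Rightarrow> ennreal"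
  assumes "K < top" "I \<noteq> {}"
  shows "K * (INF i\<in>I. f i) = (INF i\<in>I. K * f i)"
proof -
  have m: "mono (\<lambda>x::ennreal. K * x)" by (intro monoI mult_left_mono) auto
  have c: "continuous (at_right (Inf (f ` I))) (\<lambda>x::ennreal. K * x)"
    unfolding continuous_within
    by (rule ennreal_tendsto_cmult[OF assms(1)]) (rule tendsto_ident_at)
  have "K * Inf (f ` I) = (INF s\<in>f ` I. K * s)"
    by (rule continuous_at_Inf_mono[OF m c]) (use assms in auto)
  then show ?thesis by (simp add: image_image)
qed

lemma Pbar_delta_mono_delta:
  "\<delta>1 \<le> \<delta>2 \<Longrightarrow> Pbar_delta \<mu> \<nu> q t s \<delta>1 E \<le> Pbar_delta \<mu> \<nu> q t s \<delta>2 E"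
  unfolding Pbar_delta_def centered_packing_def
  by (rule SUP_subset_mono) auto

lemma Pbar_delta_mono_set:
  "E \<subseteq> F \<Longrightarrow> Pbar_delta \<mu> \<nu> q t s \<delta> E \<le> Pbar_delta \<mu> \<nu> q t s \<delta> F"
  unfolding Pbar_delta_def centered_packing_def
  by (rule SUP_subset_mono) auto

lemma Hbar_delta_mono_delta:
  "\<delta>1 \<le> \<delta>2 \<Longrightarrow> Hbar_delta \<mu> \<nu> q t s \<delta>2 E \<le> Hbar_delta \<mu> \<nu> q t s \<delta>1 E"
  unfolding Hbar_delta_def centered_covering_def
  by (rule INF_superset_mono) auto

lemma Pbar_le_delta: "\<delta> > 0 \<Longrightarrow> Pbar \<mu> \<nu> q t s E \<le> Pbar_delta \<mu> \<nu> q t s \<delta> E"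
  unfolding Pbar_def by (rule INF_lower) auto

lemma Hbar_delta_le: "\<delta> > 0 \<Longrightarrow> Hbar_delta \<mu> \<nu> q t s \<delta> E \<le> Hbar \<mu> \<nu> q t s E"
  unfolding Hbar_def by (rule SUP_upper) auto

lemma Hbar_delta_subadd:
  fixes G :: "nat \<Rightarrow> 'a::metric_space set"
  shows "Hbar_delta \<mu> \<nu> q t s \<delta> (\<Union>m. G m) \<le> (\<Sum>m. Hbar_delta \<mu> \<nu> q t s \<delta> (G m))"
proof (rule ennreal_le_epsilon)
  fix e :: real
  assume fin: "(\<Sum>m. Hbar_delta \<mu> \<nu> q t s \<delta> (G m)) < top" and e: "0 < e"
  let ?H = "\<lambda>m. Hbar_delta \<mu> \<nu> q t s \<delta> (G m)"
  let ?T = "term_mn \<mu> \<nu> q t s"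
  define ee where "ee m = e * (1/2)^Suc m" for m
  have eepos: "ee m > 0" for m unfolding ee_def using e by simp
  have Hfin: "?H m < top" for m
  proof -
    have "?H m \<le> (\<Sum>m. ?H m)" using sum_le_suminf[of ?H "{m}"] by simp
    then show ?thesis using fin by simp
  qed
  have ex: "\<forall>m. \<exists>P. centered_covering (G m) \<delta> P \<and> infsum ?T P < ?H m + ennreal (ee m)"
  proof
    fix m
    have "?H m < ?H m + ennreal (ee m)"
      using Hfin[of m] eepos[of m] ennreal_add_left_cancel_less[of "?H m" 0 "ennreal (ee m)"] by simp
    then show "\<exists>P. centered_covering (G m) \<delta> P \<and> infsum ?T P < ?H m + ennreal (ee m)"
      unfolding Hbar_delta_def[of \<mu> \<nu> q t s \<delta> "G m"] INF_less_iff by auto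
  qed
  obtain P where P0: "\<forall>m. centered_covering (G m) \<delta> (P m) \<and> infsum ?T (P m) < ?H m + ennreal (ee m)"
    using choice[OF ex] by blast
  have P: "\<And>m. centered_covering (G m) \<delta> (P m)" "\<And>m. infsum ?T (P m) < ?H m + ennreal (ee m)"
    using P0 by auto
  have cov: "centered_covering (\<Union>m. G m) \<delta> (\<Union>m. P m)"
    unfolding centered_covering_def
  proof (intro conjI)
    have c: "countable (P m)" "\<forall>(x,r)\<in>P m. x \<in> G m \<and> 0 < r \<and> r \<le> \<delta>"
      "G m \<subseteq> (\<Union>p\<in>P m. cball (fst p) (snd p))" for m
      using P(1)[of m] unfolding centered_covering_def by auto
    show "countable (\<Union>m. P m)" using c(1) by (intro countable_UN) auto
    show "\<forall>(x,r)\<in>(\<Union>m. P m). x \<in> (\<Union>m. G m) \<and> 0 < r \<and> r \<le> \<delta>"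
    proof
      fix p assume "p \<in> (\<Union>m. P m)"
      then obtain m where m: "p \<in> P m" by blast
      obtain x r where p: "p = (x, r)" by (cases p)
      have "x \<in> G m \<and> 0 < r \<and> r \<le> \<delta>" using c(2)[of m] m p by blast
      then show "case p of (x, r) \<Rightarrow> x \<in> (\<Union>m. G m) \<and> 0 < r \<and> r \<le> \<delta>" using p by blast
    qed
    show "(\<Union>m. G m) \<subseteq> (\<Union>p\<in>(\<Union>m. P m). cball (fst p) (snd p))"
    proof
      fix y assume "y \<in> (\<Union>m. G m)"
      then obtain m where "y \<in> G m" by blast
      then obtain p where "p \<in> P m" "y \<in> cball (fst p) (snd p)" using c(3)[of m] by blast
      then show "y \<in> (\<Union>p\<in>(\<Union>m. P m). cball (fst p) (snd p))" by blast
    qed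
  qed
  have "Hbar_delta \<mu> \<nu> q t s \<delta> (\<Union>m. G m) \<le> infsum ?T (\<Union>m. P m)"
    unfolding Hbar_delta_def by (rule INF_lower) (use cov in simp)
  also have "\<dots> \<le> (\<Sum>m. infsum ?T (P m))" by (rule infsum_UN_le)
  also have "\<dots> \<le> (\<Sum>m. ?H m + ennreal (ee m))" by (intro suminf_le) (use P(2) less_imp_le in auto)
  also have "\<dots> = (\<Sum>m. ?H m) + (\<Sum>m. ennreal (ee m))" by (rule suminf_add[symmetric]) auto
  also have "(\<Sum>m. ennreal (ee m)) = ennreal e"
  proof -
    have "ee sums (e * 1)" unfolding ee_def by (intro sums_mult power_half_series)
    then have "summable ee" "suminf ee = e" by (auto simp: sums_iff)
    then show ?thesis using suminf_ennreal2[of ee] eepos less_imp_le by metis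
  qed
  finally show "Hbar_delta \<mu> \<nu> q t s \<delta> (\<Union>m. G m) \<le> (\<Sum>m. ?H m) + ennreal e" .
qed

lemma Hbar_subadd:
  fixes G :: "nat \<Rightarrow> 'a::metric_space set"
  shows "Hbar \<mu> \<nu> q t s (\<Union>m. G m) \<le> (\<Sum>m. Hbar \<mu> \<nu> q t s (G m))"
  unfolding Hbar_def[of _ _ _ _ _ "\<Union>m. G m"]
proof (rule SUP_least)
  fix \<delta> :: real assume "\<delta> \<in> {0<..}"
  then have "Hbar_delta \<mu> \<nu> q t s \<delta> (G m) \<le> Hbar \<mu> \<nu> q t s (G m)" for m by (intro Hbar_delta_le) auto
  then have "(\<Sum>m. Hbar_delta \<mu> \<nu> q t s \<delta> (G m)) \<le> (\<Sum>m. Hbar \<mu> \<nu> q t s (G m))"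
    by (intro suminf_le) auto
  then show "Hbar_delta \<mu> \<nu> q t s \<delta> (\<Union>m. G m) \<le> (\<Sum>m. Hbar \<mu> \<nu> q t s (G m))"
    using Hbar_delta_subadd order_trans by blast
qed

lemma term_mono_s:
  assumes "s1 \<le> s" "0 < snd p" "snd p \<le> 1/2"
  shows "term_mn \<mu> \<nu> q t s p \<le> term_mn \<mu> \<nu> q t s1 p"
proof -
  have "(2 * snd p) powr s \<le> (2 * snd p) powr s1"
    using assms by (intro powr_mono') auto
  then show ?thesis unfolding term_mn_def by (intro mult_left_mono ennreal_leI) auto
qed

lemma Pbar_delta_mono_s:
  assumes "s1 \<le> s" "\<delta> \<le> 1/2"
  shows "Pbar_delta \<mu> \<nu> q t s \<delta> E \<le> Pbar_delta \<mu> \<nu> q t s1 \<delta> E"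
  unfolding Pbar_delta_def
proof (rule SUP_mono)
  fix Q assume Q: "Q \<in> {Q. centered_packing E \<delta> Q}"
  have "infsum (term_mn \<mu> \<nu> q t s) Q \<le> infsum (term_mn \<mu> \<nu> q t s1) Q"
  proof (rule infsum_mono)
    show "term_mn \<mu> \<nu> q t s summable_on Q" by (rule nonneg_summable_on_complete) simp
    show "term_mn \<mu> \<nu> q t s1 summable_on Q" by (rule nonneg_summable_on_complete) simp
    fix p assume "p \<in> Q"
    then have "0 < snd p" "snd p \<le> \<delta>" using Q unfolding centered_packing_def by auto
    then show "term_mn \<mu> \<nu> q t s p \<le> term_mn \<mu> \<nu> q t s1 p"
      using assms by (intro term_mono_s) auto
  qed
  then show "\<exists>m\<in>{Q. centered_packing E \<delta> Q}. infsum (term_mn \<mu> \<nu> q t s) Q \<le> infsum (term_mn \<mu> \<nu> q t s1) m"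
    using Q by blast
qed

lemma Pbar_mono_s:
  assumes "s1 \<le> s"
  shows "Pbar \<mu> \<nu> q t s E \<le> Pbar \<mu> \<nu> q t s1 E"
  unfolding Pbar_def[of _ _ _ _ s1]
proof (rule INF_greatest)
  fix \<delta> :: real assume "\<delta> \<in> {0<..}"
  then have d: "min \<delta> (1/2) > 0" by simp
  have "Pbar \<mu> \<nu> q t s E \<le> Pbar_delta \<mu> \<nu> q t s (min \<delta> (1/2)) E" by (rule Pbar_le_delta[OF d])
  also have "\<dots> \<le> Pbar_delta \<mu> \<nu> q t s1 (min \<delta> (1/2)) E" by (rule Pbar_delta_mono_s[OF assms]) simp
  also have "\<dots> \<le> Pbar_delta \<mu> \<nu> q t s1 \<delta> E" by (rule Pbar_delta_mono_delta) simp
  finally show "Pbar \<mu> \<nu> q t s E \<le> Pbar_delta \<mu> \<nu> q t s1 \<delta> E" .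
qed

lemma Pmeas_mono_s:
  assumes "s1 \<le> s"
  shows "Pmeas \<mu> \<nu> q t s E \<le> Pmeas \<mu> \<nu> q t s1 E"
  unfolding Pmeas_def
proof (rule INF_mono)
  fix A :: "nat \<Rightarrow> _ set" assume "A \<in> {A. E \<subseteq> (\<Union>i. A i)}"
  moreover have "(\<Sum>i. Pbar \<mu> \<nu> q t s (A i)) \<le> (\<Sum>i. Pbar \<mu> \<nu> q t s1 (A i))"
    by (intro suminf_le Pbar_mono_s[OF assms]) auto
  ultimately show "\<exists>m\<in>{A. E \<subseteq> (\<Union>i. A i)}. (\<Sum>i. Pbar \<mu> \<nu> q t s (m i)) \<le> (\<Sum>i. Pbar \<mu> \<nu> q t s1 (A i))"
    by blast
qed

lemma Bdim_Pmeas_zero: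
  assumes "Bdim \<mu> \<nu> q t E < ereal s"
  shows "Pmeas \<mu> \<nu> q t s E = 0"
proof -
  obtain x where x: "x \<in> {ereal s | s. Pmeas \<mu> \<nu> q t s E = 0}" "x < ereal s"
    using assms unfolding Bdim_def Inf_less_iff by blast
  then obtain s1 where s1: "x = ereal s1" "Pmeas \<mu> \<nu> q t s1 E = 0" by auto
  have "s1 \<le> s" using x(2) s1(1) by simp
  then have "Pmeas \<mu> \<nu> q t s E \<le> Pmeas \<mu> \<nu> q t s1 E" by (rule Pmeas_mono_s)
  then show ?thesis using s1(2) by simp
qed

lemma piece_zero:
  fixes \<mu> \<nu> :: "'a::euclidean_space measure" and G S :: "'a set"
  assumes bS: "bounded S" and GS: "G \<subseteq> S"
    and loc: "\<forall>x\<in>G. \<forall>\<eta>>0. \<exists>r. 0 < r \<and> r < \<eta> \<and> term_mn \<mu> \<nu> q t s (x, r) \<le> ennreal C * term_mn \<mu> \<nu> q' t' s' (x, r)"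
    and C: "C \<ge> 0"
    and P0: "Pmeas \<mu> \<nu> q' t' s' S = 0"
  shows "Hbar \<mu> \<nu> q t s G = 0"
proof -
  obtain Nc :: nat where Nc: "\<forall>(G::'a set) \<delta> r (f::'a\<times>real \<Rightarrow> ennreal) g C.
     bounded G \<and> (\<forall>x\<in>G. 0 < r x \<and> r x \<le> \<delta> \<and> f (x, r x) \<le> C * g (x, r x)) \<longrightarrow>
     (\<exists>P. centered_covering G \<delta> P \<and>
        infsum f P \<le> of_nat Nc * C * (SUP Q\<in>{Q. centered_packing G \<delta> Q}. infsum g Q))"
    using cover_pack by blast
  define K where "K = real Nc * C"
  have K0: "K \<ge> 0" unfolding K_def using C by simp
  have claim1: "Hbar_delta \<mu> \<nu> q t s \<delta> G' \<le> ennreal K * Pbar_delta \<mu> \<nu> q' t' s' \<delta> G'"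
    if G': "G' \<subseteq> G" and d: "\<delta> > 0" for G' \<delta>
  proof -
    have "\<forall>x\<in>G'. \<exists>r. 0 < r \<and> r < \<delta> \<and> term_mn \<mu> \<nu> q t s (x, r) \<le> ennreal C * term_mn \<mu> \<nu> q' t' s' (x, r)"
      using loc G' d by blast
    then obtain r where r: "\<forall>x\<in>G'. 0 < r x \<and> r x < \<delta> \<and> term_mn \<mu> \<nu> q t s (x, r x) \<le> ennreal C * term_mn \<mu> \<nu> q' t' s' (x, r x)"
      by (rule bchoice[THEN exE]) blast
    have bG': "bounded G'" using bS GS G' bounded_subset by blast
    have "bounded G' \<and> (\<forall>x\<in>G'. 0 < r x \<and> r x \<le> \<delta> \<and> term_mn \<mu> \<nu> q t s (x, r x) \<le> ennreal C * term_mn \<mu> \<nu> q' t' s' (x, r x))"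
      using bG' r by auto
    then obtain P where P: "centered_covering G' \<delta> P"
      "infsum (term_mn \<mu> \<nu> q t s) P \<le> of_nat Nc * ennreal C * (SUP Q\<in>{Q. centered_packing G' \<delta> Q}. infsum (term_mn \<mu> \<nu> q' t' s') Q)"
      using Nc[THEN spec[of _ G'], THEN spec[of _ \<delta>], THEN spec[of _ r], THEN spec[of _ "term_mn \<mu> \<nu> q t s"],
        THEN spec[of _ "term_mn \<mu> \<nu> q' t' s'"], THEN spec[of _ "ennreal C"]] by blast
    have "Hbar_delta \<mu> \<nu> q t s \<delta> G' \<le> infsum (term_mn \<mu> \<nu> q t s) P"
      unfolding Hbar_delta_def by (rule INF_lower) (use P(1) in simp)
    also have "\<dots> \<le> of_nat Nc * ennreal C * Pbar_delta \<mu> \<nu> q' t' s' \<delta> G'"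
      using P(2) unfolding Pbar_delta_def .
    also have "of_nat Nc * ennreal C = ennreal K"
      unfolding K_def using C by (simp add: ennreal_mult ennreal_of_nat_eq_real_of_nat)
    finally show ?thesis .
  qed
  have claim2: "Hbar_delta \<mu> \<nu> q t s \<delta> G' \<le> ennreal K * Pbar \<mu> \<nu> q' t' s' A"
    if G': "G' \<subseteq> G" "G' \<subseteq> A" and d: "\<delta> > 0" for G' A \<delta>
  proof -
    have "Hbar_delta \<mu> \<nu> q t s \<delta> G' \<le> ennreal K * Pbar_delta \<mu> \<nu> q' t' s' \<delta>' A" if d': "\<delta>' > 0" for \<delta>'
    proof -
      have m: "min \<delta> \<delta>' > 0" using d d' by simp
      have "Hbar_delta \<mu> \<nu> q t s \<delta> G' \<le> Hbar_delta \<mu> \<nu> q t s (min \<delta> \<delta>') G'"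
        by (rule Hbar_delta_mono_delta) simp
      also have "\<dots> \<le> ennreal K * Pbar_delta \<mu> \<nu> q' t' s' (min \<delta> \<delta>') G'" by (rule claim1[OF G'(1) m])
      also have "\<dots> \<le> ennreal K * Pbar_delta \<mu> \<nu> q' t' s' (min \<delta> \<delta>') A"
        by (intro mult_left_mono Pbar_delta_mono_set G'(2)) simp
      also have "\<dots> \<le> ennreal K * Pbar_delta \<mu> \<nu> q' t' s' \<delta>' A"
        by (intro mult_left_mono Pbar_delta_mono_delta) simp_all
      finally show ?thesis .
    qed
    then have "Hbar_delta \<mu> \<nu> q t s \<delta> G' \<le> (INF \<delta>'\<in>{0<..}. ennreal K * Pbar_delta \<mu> \<nu> q' t' s' \<delta>' A)"
      by (intro INF_greatest) auto
    also have "\<dots> = ennreal K * Pbar \<mu> \<nu> q' t' s' A"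
      unfolding Pbar_def by (rule ennreal_mult_INF[symmetric]) auto
    finally show ?thesis .
  qed
  have zero_d: "Hbar_delta \<mu> \<nu> q t s \<delta> G = 0" if d: "\<delta> > 0" for \<delta>
  proof -
    have "Hbar_delta \<mu> \<nu> q t s \<delta> G \<le> 0"
    proof (rule ennreal_le_epsilon)
      fix e :: real assume e: "0 < e"
      define e' where "e' = e / (K + 1)"
      have e': "e' > 0" unfolding e'_def using e K0 by simp
      have "Pmeas \<mu> \<nu> q' t' s' S < ennreal e'" using P0 e' by simp
      then obtain A :: "nat \<Rightarrow> 'a set" where A: "S \<subseteq> (\<Union>i. A i)" "(\<Sum>i. Pbar \<mu> \<nu> q' t' s' (A i)) < ennreal e'"
        unfolding Pmeas_def INF_less_iff by blast
      have GU: "G = (\<Union>i. G \<inter> A i)" using GS A(1) by blast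
      have "Hbar_delta \<mu> \<nu> q t s \<delta> G \<le> (\<Sum>i. Hbar_delta \<mu> \<nu> q t s \<delta> (G \<inter> A i))"
        by (subst GU) (rule Hbar_delta_subadd)
      also have "\<dots> \<le> (\<Sum>i. ennreal K * Pbar \<mu> \<nu> q' t' s' (A i))"
        by (intro suminf_le claim2 d) auto
      also have "\<dots> = ennreal K * (\<Sum>i. Pbar \<mu> \<nu> q' t' s' (A i))" by simp
      also have "\<dots> \<le> ennreal K * ennreal e'" using A(2) by (intro mult_left_mono) auto
      also have "\<dots> = ennreal (K * e')" using K0 e' by (simp add: ennreal_mult)
      also have "\<dots> \<le> ennreal e"
      proof (rule ennreal_leI)
        have "K * e' = e * (K / (K + 1))" unfolding e'_def using K0 by (simp add: field_simps)
        also have "\<dots> \<le> e * 1" using K0 e by (intro mult_left_mono) auto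
        finally show "K * e' \<le> e" by simp
      qed
      finally show "Hbar_delta \<mu> \<nu> q t s \<delta> G \<le> 0 + ennreal e" by simp
    qed
    then show ?thesis by simp
  qed
  show ?thesis unfolding Hbar_def using zero_d by simp
qed

lemma meas_pos:
  fixes \<mu> :: "'a::euclidean_space measure"
  assumes "prob_space \<mu>" "sets \<mu> = sets borel" "x \<in> msupp \<mu>" "r > 0"
  shows "measure \<mu> (cball x r) > 0"
proof -
  interpret prob_space \<mu> by fact
  have "emeasure \<mu> (ball x r) > 0" using assms(3,4) unfolding msupp_def by auto
  moreover have "cball x r \<in> sets \<mu>" using assms(2) by simp
  moreover have "emeasure \<mu> (ball x r) \<le> emeasure \<mu> (cball x r)"
    using calculation(2) by (intro emeasure_mono) auto
  ultimately have "emeasure \<mu> (cball x r) > 0" by simp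
  then show ?thesis using emeasure_eq_measure by simp
qed

lemma term_real:
  assumes "m > 0" "n > 0" "r > 0"
    and "measure \<mu> (cball x r) = m" "measure \<nu> (cball x r) = n"
  shows "term_mn \<mu> \<nu> q t s (x, r) = ennreal (m powr q * n powr t * (2*r) powr s)"
  unfolding term_mn_def cpow_def using assms by (simp add: ennreal_mult)

lemma shift_ineq:
  fixes m n r :: real
  assumes "m > 0" "n > 0" "r > 0" "m powr \<kappa> \<le> r powr (\<kappa>*a)"
  shows "m powr q * n powr t * (2*r) powr s \<le> 2 powr (-(\<kappa>*a)) * (m powr (q-\<kappa>) * n powr t * (2*r) powr (s + \<kappa>*a))"
proof -
  have e1: "m powr q = m powr (q-\<kappa>) * m powr \<kappa>" by (simp add: powr_add[symmetric])
  have e2: "2 powr (-(\<kappa>*a)) * (2*r) powr (s + \<kappa>*a) = (2*r) powr s * r powr (\<kappa>*a)"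
    using assms(3) by (simp add: powr_add powr_mult powr_minus field_simps)
  have "m powr q * n powr t * (2*r) powr s = (m powr (q-\<kappa>) * n powr t * (2*r) powr s) * m powr \<kappa>"
    by (simp add: e1)
  also have "\<dots> \<le> (m powr (q-\<kappa>) * n powr t * (2*r) powr s) * r powr (\<kappa>*a)"
    using assms by (intro mult_left_mono) auto
  also have "\<dots> = 2 powr (-(\<kappa>*a)) * (m powr (q-\<kappa>) * n powr t * (2*r) powr (s + \<kappa>*a))"
    using e2 by (simp add: mult_ac)
  finally show ?thesis .
qed

lemma pow_cond:
  fixes m r :: real
  assumes "m > 0" "0 < r" "r < 1"
    and "(\<kappa> > 0 \<and> ln m / ln r > a) \<or> (\<kappa> < 0 \<and> ln m / ln r < a)"
  shows "m powr \<kappa> \<le> r powr (\<kappa>*a)"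
proof -
  have lr: "ln r < 0" using assms by simp
  have ra: "r powr a = exp (a * ln r)" using assms by (simp add: powr_def)
  have rr: "r powr (\<kappa>*a) = (r powr a) powr \<kappa>" using assms by (simp add: powr_powr mult.commute)
  have rpos: "r powr a > 0" using assms by simp
  from assms(4) show ?thesis
  proof
    assume h: "\<kappa> > 0 \<and> ln m / ln r > a"
    then have "ln m < a * ln r" using lr by (simp add: pos_less_divide_eq neg_less_divide_eq)
    then have "m < r powr a" using assms ra by (metis exp_less_mono exp_ln)
    then show ?thesis unfolding rr using h assms by (intro powr_mono2) auto
  next
    assume h: "\<kappa> < 0 \<and> ln m / ln r < a"
    then have "ln m > a * ln r" using lr by (simp add: divide_less_eq neg_divide_less_eq)
    then have "m > r powr a" using assms ra by (metis exp_less_mono exp_ln)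
    then show ?thesis unfolding rr using h assms rpos by (intro powr_mono2') auto
  qed
qed

lemma freq_small:
  assumes "frequently P (at_right (0::real))" "\<eta> > 0"
  shows "\<exists>r. 0 < r \<and> r < \<eta> \<and> P r"
proof (rule ccontr)
  assume "\<not> ?thesis"
  then have "eventually (\<lambda>r. \<not> P r) (at_right (0::real))"
    unfolding eventually_at_right_field using assms(2) by auto
  then show False using assms(1) unfolding frequently_def by simp
qed

lemma not_tendsto_freq:
  fixes f :: "real \<Rightarrow> real"
  assumes "\<not> (f \<longlongrightarrow> a) (at_right 0)"
  shows "\<exists>m::nat. frequently (\<lambda>r. f r > a + 1/Suc m) (at_right 0) \<or> frequently (\<lambda>r. f r < a - 1/Suc m) (at_right 0)"
proof -
  obtain e where e: "e > 0" "\<not> eventually (\<lambda>r. dist (f r) a < e) (at_right 0)"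
    using assms unfolding tendsto_iff by blast
  obtain m where m: "inverse (real (Suc m)) < e" using reals_Archimedean[OF e(1)] by blast
  have "frequently (\<lambda>r. \<not> dist (f r) a < e) (at_right 0)" using e(2) by (simp add: not_eventually)
  then have "frequently (\<lambda>r. f r > a + 1/Suc m \<or> f r < a - 1/Suc m) (at_right 0)"
  proof (rule frequently_elim1)
    fix r assume "\<not> dist (f r) a < e"
    then have "\<bar>f r - a\<bar> \<ge> e" by (simp add: dist_real_def)
    then show "f r > a + 1/Suc m \<or> f r < a - 1/Suc m" using m by (auto simp: inverse_eq_divide abs_if split: if_splits)
  qed
  then show ?thesis unfolding frequently_disj_iff by blast
qed

definition Pc :: "'a::metric_space measure \<Rightarrow> 'a set \<Rightarrow> real \<Rightarrow> real \<Rightarrow> real \<Rightarrow> 'a set" where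
  "Pc \<omega> S \<gamma> \<sigma> d = {x\<in>S. frequently (\<lambda>r. \<sigma> * (ln (measure \<omega> (cball x r)) / ln r - \<gamma>) > d) (at_right 0)}"

lemma claim_dir:
  fixes \<mu> \<nu> :: "'a::euclidean_space measure" and q t :: real and D :: "real \<times> real \<Rightarrow> real"
  assumes sm: "sets \<mu> = sets borel" "prob_space \<mu>"
      and sn: "sets \<nu> = sets borel" "prob_space \<nu>"
      and bS: "bounded (msupp \<mu> \<inter> msupp \<nu>)"
      and fin: "eventually (\<lambda>p. \<bar>Bmunu \<mu> \<nu> (fst p) (snd p)\<bar> \<noteq> \<infinity>) (nhds (q, t))"
      and der: "((\<lambda>p. real_of_ereal (Bmunu \<mu> \<nu> (fst p) (snd p))) has_derivative D) (at (q, t))"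
      and sig: "\<sigma> = 1 \<or> \<sigma> = -1" and d: "d > 0"
      and w: "(\<omega> = \<mu> \<and> v = (1,0)) \<or> (\<omega> = \<nu> \<and> v = (0,1))"
      and G: "G \<subseteq> Pc \<omega> (msupp \<mu> \<inter> msupp \<nu>) (- D v) \<sigma> d"
  shows "Hbar \<mu> \<nu> q t (real_of_ereal (Bmunu \<mu> \<nu> q t)) G = 0"
proof -
  define S where "S = msupp \<mu> \<inter> msupp \<nu>"
  define Fb where "Fb p = real_of_ereal (Bmunu \<mu> \<nu> (fst p) (snd p))" for p
  define s0 where "s0 = Fb (q,t)"
  define \<gamma> where "\<gamma> = - D v"
  have s0': "real_of_ereal (Bmunu \<mu> \<nu> q t) = s0" unfolding s0_def Fb_def by simp
  have bl: "bounded_linear D" using der unfolding has_derivative_at_alt by blast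
  then have lin: "D (c *\<^sub>R y) = c * D y" for c y by (simp add: linear_simps)
  obtain \<delta>1 where \<delta>1: "\<delta>1 > 0" "\<forall>y. norm (y - (q,t)) < \<delta>1 \<longrightarrow> norm (Fb y - Fb (q,t) - D (y - (q,t))) \<le> d/2 * norm (y - (q,t))"
    using der d unfolding has_derivative_at_alt Fb_def[abs_def] by (meson half_gt_zero)
  obtain \<delta>2 where \<delta>2: "\<delta>2 > 0" "\<forall>y. dist y (q,t) < \<delta>2 \<longrightarrow> \<bar>Bmunu \<mu> \<nu> (fst y) (snd y)\<bar> \<noteq> \<infinity>"
    using fin unfolding eventually_nhds_metric by blast
  define k where "k = min \<delta>1 \<delta>2 / 2"
  have k: "k > 0" "k < \<delta>1" "k < \<delta>2" unfolding k_def using \<delta>1 \<delta>2 by auto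
  define \<kappa> where "\<kappa> = \<sigma> * k"
  have ss: "\<sigma> * \<sigma> = 1" "\<bar>\<sigma>\<bar> = 1" using sig by auto
  define y where "y = (q,t) - \<kappa> *\<^sub>R v"
  have vn: "norm v = 1" using w by (auto simp: norm_Pair)
  have ny: "norm (y - (q,t)) = k" unfolding y_def \<kappa>_def using vn k ss by (simp add: abs_mult)
  have Dy: "D (y - (q,t)) = \<kappa> * \<gamma>" unfolding y_def \<gamma>_def using lin[of "-\<kappa>" v] by simp
  have approx: "\<bar>Fb y - s0 - \<kappa> * \<gamma>\<bar> \<le> d/2 * k"
    using \<delta>1(2)[rule_format, of y] ny k Dy unfolding s0_def by simp
  have yfin: "\<bar>Bmunu \<mu> \<nu> (fst y) (snd y)\<bar> \<noteq> \<infinity>"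
    using \<delta>2(2)[rule_format, of y] ny k by (simp add: dist_norm)
  define a where "a = \<gamma> + \<sigma> * d"
  define s' where "s' = s0 + \<kappa> * a"
  have ka: "\<kappa> * a = \<kappa> * \<gamma> + k * d" unfolding a_def \<kappa>_def using ss
    by (simp add: algebra_simps)
  have h1: "Fb y - s0 - \<kappa> * \<gamma> \<le> d/2 * k" using approx by (rule abs_le_D1)
  have h2: "d/2 * k = (k*d)/2" by simp
  have kd: "0 < k*d" using k d by simp
  have "Fb y < s'" unfolding s'_def using h1 h2 ka kd by linarith
  moreover have "Bmunu \<mu> \<nu> (fst y) (snd y) = ereal (Fb y)" using yfin unfolding Fb_def
    by (cases "Bmunu \<mu> \<nu> (fst y) (snd y)") auto
  ultimately have "Bdim \<mu> \<nu> (fst y) (snd y) S < ereal s'" unfolding Bmunu_def S_def by simp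
  then have P0: "Pmeas \<mu> \<nu> (fst y) (snd y) s' S = 0" by (rule Bdim_Pmeas_zero)
  have ydef: "(\<omega> = \<mu> \<and> fst y = q - \<kappa> \<and> snd y = t) \<or> (\<omega> = \<nu> \<and> fst y = q \<and> snd y = t - \<kappa>)"
    using w unfolding y_def by auto
  define C where "C = 2 powr (-(\<kappa>*a))"
  have loc: "\<forall>x\<in>G. \<forall>\<eta>>0. \<exists>r. 0 < r \<and> r < \<eta> \<and>
      term_mn \<mu> \<nu> q t s0 (x, r) \<le> ennreal C * term_mn \<mu> \<nu> (fst y) (snd y) s' (x, r)"
  proof (intro ballI allI impI)
    fix x \<eta> assume xG: "x \<in> G" and eta: "(\<eta>::real) > 0"
    have xS: "x \<in> S" and fr: "frequently (\<lambda>r. \<sigma> * (ln (measure \<omega> (cball x r)) / ln r - \<gamma>) > d) (at_right 0)"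
      using G xG unfolding Pc_def S_def \<gamma>_def by auto
    obtain r where r: "0 < r" "r < min \<eta> 1" "\<sigma> * (ln (measure \<omega> (cball x r)) / ln r - \<gamma>) > d"
      using freq_small[OF fr, of "min \<eta> 1"] eta by auto
    define mm where "mm = measure \<mu> (cball x r)"
    define nn where "nn = measure \<nu> (cball x r)"
    have mpos: "mm > 0" unfolding mm_def using meas_pos[OF sm(2) sm(1)] xS r unfolding S_def by auto
    have npos: "nn > 0" unfolding nn_def using meas_pos[OF sn(2) sn(1)] xS r unfolding S_def by auto
    have wpos: "measure \<omega> (cball x r) > 0" using w mpos npos unfolding mm_def nn_def by auto
    have cond: "(\<kappa> > 0 \<and> ln (measure \<omega> (cball x r)) / ln r > a) \<or> (\<kappa> < 0 \<and> ln (measure \<omega> (cball x r)) / ln r < a)"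
      using sig r(3) k unfolding \<kappa>_def a_def by auto
    have pc: "(measure \<omega> (cball x r)) powr \<kappa> \<le> r powr (\<kappa>*a)"
      by (rule pow_cond[OF wpos r(1) _ cond]) (use r(2) in simp)
    have real_ineq: "mm powr q * nn powr t * (2*r) powr s0 \<le> C * (mm powr (fst y) * nn powr (snd y) * (2*r) powr s')"
      using ydef
    proof
      assume h: "\<omega> = \<mu> \<and> fst y = q - \<kappa> \<and> snd y = t"
      show ?thesis using shift_ineq[OF mpos npos r(1), of \<kappa> a q t s0] pc h
        unfolding C_def s'_def mm_def by simp
    next
      assume h: "\<omega> = \<nu> \<and> fst y = q \<and> snd y = t - \<kappa>"
      have "nn powr t * mm powr q * (2*r) powr s0 \<le> 2 powr (-(\<kappa>*a)) * (nn powr (t-\<kappa>) * mm powr q * (2*r) powr (s0 + \<kappa>*a))"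
        using shift_ineq[OF npos mpos r(1), of \<kappa> a t q s0] pc h unfolding nn_def by simp
      then show ?thesis using h unfolding C_def s'_def by (simp add: mult_ac)
    qed
    have "term_mn \<mu> \<nu> q t s0 (x, r) = ennreal (mm powr q * nn powr t * (2*r) powr s0)"
      by (rule term_real[OF mpos npos r(1)]) (simp_all add: mm_def nn_def)
    also have "\<dots> \<le> ennreal (C * (mm powr (fst y) * nn powr (snd y) * (2*r) powr s'))"
      using real_ineq by (rule ennreal_leI)
    also have "\<dots> = ennreal C * ennreal (mm powr (fst y) * nn powr (snd y) * (2*r) powr s')"
      unfolding C_def by (simp add: ennreal_mult)
    also have "ennreal (mm powr (fst y) * nn powr (snd y) * (2*r) powr s') = term_mn \<mu> \<nu> (fst y) (snd y) s' (x, r)"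
      by (rule term_real[OF mpos npos r(1), symmetric]) (simp_all add: mm_def nn_def)
    finally show "\<exists>r. 0 < r \<and> r < \<eta> \<and> term_mn \<mu> \<nu> q t s0 (x, r) \<le> ennreal C * term_mn \<mu> \<nu> (fst y) (snd y) s' (x, r)"
      using r by auto
  qed
  have GS: "G \<subseteq> S" using G unfolding Pc_def S_def by auto
  have "Hbar \<mu> \<nu> q t s0 G = 0"
    by (rule piece_zero[OF bS[folded S_def] GS loc _ P0]) (simp add: C_def)
  then show ?thesis using s0' by simp
qed

lemma freq_up:
  fixes f :: "'b \<Rightarrow> real"
  assumes "frequently (\<lambda>r. f r > g + d) F"
  shows "frequently (\<lambda>r. 1 * (f r - g) > d) F"
  using assms by (rule frequently_elim1) (simp add: algebra_simps)

lemma freq_lo: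
  fixes f :: "'b \<Rightarrow> real"
  assumes "frequently (\<lambda>r. f r < g - d) F"
  shows "frequently (\<lambda>r. (-1) * (f r - g) > d) F"
  using assms by (rule frequently_elim1) (simp add: algebra_simps)

theorem mainTheorem8:
  fixes \<mu> \<nu> :: "'a::euclidean_space measure" and q t :: real
    and D :: "real \<times> real \<Rightarrow> real"
  assumes "sets \<mu> = sets borel" "prob_space \<mu>" "compact (msupp \<mu>)"
      and "sets \<nu> = sets borel" "prob_space \<nu>" "compact (msupp \<nu>)"
      and "eventually (\<lambda>p. \<bar>Bmunu \<mu> \<nu> (fst p) (snd p)\<bar> \<noteq> \<infinity>) (nhds (q, t))"
      and "((\<lambda>p. real_of_ereal (Bmunu \<mu> \<nu> (fst p) (snd p))) has_derivative D) (at (q, t))"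
  shows "Hmeas \<mu> \<nu> q t (real_of_ereal (Bmunu \<mu> \<nu> q t))
           ((msupp \<mu> \<inter> msupp \<nu>) - Eset \<mu> \<nu> (- D (1, 0)) (- D (0, 1))) = 0"
proof -
  define S where "S = msupp \<mu> \<inter> msupp \<nu>"
  define s0 where "s0 = real_of_ereal (Bmunu \<mu> \<nu> q t)"
  have bS: "bounded (msupp \<mu> \<inter> msupp \<nu>)"
    using assms(3,6) by (intro compact_imp_bounded compact_Int) auto
  define dd where "dd n = 1 / real (Suc (n div 4))" for n :: nat
  define piece where "piece n = (if n mod 4 = 0 then Pc \<mu> S (- D (1,0)) 1 (dd n)
      else if n mod 4 = 1 then Pc \<mu> S (- D (1,0)) (-1) (dd n)
      else if n mod 4 = 2 then Pc \<nu> S (- D (0,1)) 1 (dd n)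
      else Pc \<nu> S (- D (0,1)) (-1) (dd n))" for n
  have zero: "Hbar \<mu> \<nu> q t s0 G = 0" if "G \<subseteq> piece n" for G n
  proof -
    have ddp: "dd n > 0" unfolding dd_def by simp
    have "n mod 4 = 0 \<or> n mod 4 = 1 \<or> n mod 4 = 2 \<or> n mod 4 = 3" by auto
    then show ?thesis
    proof (elim disjE)
      assume "n mod 4 = 0"
      then show ?thesis using that unfolding s0_def piece_def S_def
        by (intro claim_dir[OF assms(1,2,4,5) bS assms(7,8), of 1 "dd n" \<mu> "(1,0)"] ddp) auto
    next
      assume "n mod 4 = 1"
      then show ?thesis using that unfolding s0_def piece_def S_def
        by (intro claim_dir[OF assms(1,2,4,5) bS assms(7,8), of "-1" "dd n" \<mu> "(1,0)"] ddp) auto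
    next
      assume "n mod 4 = 2"
      then show ?thesis using that unfolding s0_def piece_def S_def
        by (intro claim_dir[OF assms(1,2,4,5) bS assms(7,8), of 1 "dd n" \<nu> "(0,1)"] ddp) auto
    next
      assume "n mod 4 = 3"
      then show ?thesis using that unfolding s0_def piece_def S_def
        by (intro claim_dir[OF assms(1,2,4,5) bS assms(7,8), of "-1" "dd n" \<nu> "(0,1)"] ddp) auto
    qed
  qed
  have cover: "S - Eset \<mu> \<nu> (- D (1, 0)) (- D (0, 1)) \<subseteq> (\<Union>n. piece n)"
  proof
    fix x assume x: "x \<in> S - Eset \<mu> \<nu> (- D (1, 0)) (- D (0, 1))"
    then have xS: "x \<in> S" by simp
    have "\<not> ((\<lambda>r. ln (measure \<mu> (cball x r)) / ln r) \<longlongrightarrow> - D (1,0)) (at_right 0) \<or>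
          \<not> ((\<lambda>r. ln (measure \<nu> (cball x r)) / ln r) \<longlongrightarrow> - D (0,1)) (at_right 0)"
      using x unfolding Eset_def S_def by auto
    then show "x \<in> (\<Union>n. piece n)"
    proof
      assume "\<not> ((\<lambda>r. ln (measure \<mu> (cball x r)) / ln r) \<longlongrightarrow> - D (1,0)) (at_right 0)"
      then obtain m where m: "frequently (\<lambda>r. ln (measure \<mu> (cball x r)) / ln r > - D (1,0) + 1/Suc m) (at_right 0) \<or>
          frequently (\<lambda>r. ln (measure \<mu> (cball x r)) / ln r < - D (1,0) - 1/Suc m) (at_right 0)"
        using not_tendsto_freq by blast
      then show ?thesis
      proof
        assume h: "frequently (\<lambda>r. ln (measure \<mu> (cball x r)) / ln r > - D (1,0) + 1/Suc m) (at_right 0)"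
        have e: "(4*m) mod 4 = 0" "dd (4*m) = 1/Suc m" unfolding dd_def by auto
        have "piece (4*m) = Pc \<mu> S (- D (1,0)) 1 (1/Suc m)" unfolding piece_def using e by simp
        moreover have "x \<in> Pc \<mu> S (- D (1,0)) 1 (1/Suc m)" unfolding Pc_def using xS freq_up[OF h] by simp
        ultimately have "x \<in> piece (4*m)" by simp
        then show ?thesis by blast
      next
        assume h: "frequently (\<lambda>r. ln (measure \<mu> (cball x r)) / ln r < - D (1,0) - 1/Suc m) (at_right 0)"
        have e: "(4*m+1) mod 4 = 1" "dd (4*m+1) = 1/Suc m" unfolding dd_def by auto
        have "piece (4*m+1) = Pc \<mu> S (- D (1,0)) (-1) (1/Suc m)" unfolding piece_def using e by simp
        moreover have "x \<in> Pc \<mu> S (- D (1,0)) (-1) (1/Suc m)" unfolding Pc_def using xS freq_lo[OF h] by simp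
        ultimately have "x \<in> piece (4*m+1)" by simp
        then show ?thesis by blast
      qed
    next
      assume "\<not> ((\<lambda>r. ln (measure \<nu> (cball x r)) / ln r) \<longlongrightarrow> - D (0,1)) (at_right 0)"
      then obtain m where m: "frequently (\<lambda>r. ln (measure \<nu> (cball x r)) / ln r > - D (0,1) + 1/Suc m) (at_right 0) \<or>
          frequently (\<lambda>r. ln (measure \<nu> (cball x r)) / ln r < - D (0,1) - 1/Suc m) (at_right 0)"
        using not_tendsto_freq by blast
      then show ?thesis
      proof
        assume h: "frequently (\<lambda>r. ln (measure \<nu> (cball x r)) / ln r > - D (0,1) + 1/Suc m) (at_right 0)"
        have e0: "(4*m+2) div 4 = m" "(4*m+2) mod 4 = 2" by presburger+
        have e: "(4*m+2) mod 4 = 2" "dd (4*m+2) = 1/Suc m" unfolding dd_def using e0 by simp_all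
        have "piece (4*m+2) = Pc \<nu> S (- D (0,1)) 1 (1/Suc m)" unfolding piece_def using e by simp
        moreover have "x \<in> Pc \<nu> S (- D (0,1)) 1 (1/Suc m)" unfolding Pc_def using xS freq_up[OF h] by simp
        ultimately have "x \<in> piece (4*m+2)" by simp
        then show ?thesis by blast
      next
        assume h: "frequently (\<lambda>r. ln (measure \<nu> (cball x r)) / ln r < - D (0,1) - 1/Suc m) (at_right 0)"
        have e0: "(4*m+3) div 4 = m" "(4*m+3) mod 4 = 3" by presburger+
        have e: "(4*m+3) mod 4 = 3" "dd (4*m+3) = 1/Suc m" unfolding dd_def using e0 by simp_all
        have "piece (4*m+3) = Pc \<nu> S (- D (0,1)) (-1) (1/Suc m)" unfolding piece_def using e by simp
        moreover have "x \<in> Pc \<nu> S (- D (0,1)) (-1) (1/Suc m)" unfolding Pc_def using xS freq_lo[OF h] by simp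
        ultimately have "x \<in> piece (4*m+3)" by simp
        then show ?thesis by blast
      qed
    qed
  qed
  have "Hbar \<mu> \<nu> q t s0 F = 0" if F: "F \<subseteq> S - Eset \<mu> \<nu> (- D (1, 0)) (- D (0, 1))" for F
  proof -
    have FU: "F = (\<Union>n. F \<inter> piece n)" using F cover by blast
    have "Hbar \<mu> \<nu> q t s0 F \<le> (\<Sum>n. Hbar \<mu> \<nu> q t s0 (F \<inter> piece n))"
      by (subst FU) (rule Hbar_subadd)
    also have "\<dots> = 0"
    proof -
      have "Hbar \<mu> \<nu> q t s0 (F \<inter> piece n) = 0" for n by (rule zero) blast
      then show ?thesis by simp
    qed
    finally show ?thesis by simp
  qed
  then show ?thesis unfolding Hmeas_def s0_def[symmetric] S_def[symmetric]
    by (intro antisym SUP_least) auto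
qed


end
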